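(* Let $\alpha>0$, $\ell>0$, $p\in\mathbb{N}$, and set $a=\frac{1}{1+\alpha}\in(0,1)$, $\theta=\frac{\ell}{1+\alpha}>0$. For every $N\ge1$, the random partition of $\{1,\dots,N\}$ produced at time $N$ by the Chinese restaurant process with competition with parameters $a,\theta,p$ has the same law as the branch partition of $\{1,\dots,N\}$ of the modified GPORT with immigration $\mathcal{T}_{\alpha,\ell}$ with period $p$ after $N$ insertions. (Indeed the two sequences of partitions, indexed by $N$, have the same law.)
   Context: Chinese restaurant process with competition (parameters $0<a<1$, $\theta>0$, $p\in\mathbb{N}$): at time $1$ the partition is $\{\{1\}\}$. For $N\ge1$ write $N=np+k$, $0\le k<p$, and $c_N=N+(n+1)\theta$. Given a partition of $\{1,\dots,N\}$ with $m$ blocks $t_1,\dots,t_m$, element $N+1$ joins block $t_i$ with probability $(|t_i|-a)/c_N$ and forms a new singleton block with probability $((n+1)\theta+ma)/c_N$. Modified GPORT with immigration $\mathcal{T}_{\alpha,\ell}$: at time $0$ there is a single root labelled $0$. At time $N$ the forest has ordinary nodes $1,\dots,N$, the root $0$, and $\lfloor N/p\rfloor$ immigrant roots. Node $N+1$ attaches to an ordinary node $v$ with probability $(d(v)+\alpha)/C_N$ and to a root $v$ (root $0$ or an immigrant root) with probability $(d(v)+\ell)/C_N$, where $d(v)$ is the out-degree and $C_N=(1+\alpha)N+(\lfloor N/p\rfloor+1)\ell$; after node $N+1$ is attached, if $p\mid(N+1)$ a new isolated immigrant root is added. The branch partition of $\{1,\dots,N\}$ has as blocks the label sets of the subtrees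 rooted at the children of the roots. *)

theory Defs
  imports "HOL-Probability.Probability_Mass_Function"
begin

text \<open>One step from time N (partition P of {1..N}) to time N+1.
  The outcome None means "element N+1 opens a new block",
  Some t means "element N+1 joins block t".\<close>

definition crp_weight :: "real \<Rightarrow> real \<Rightarrow> nat \<Rightarrow> nat \<Rightarrow> nat set set \<Rightarrow> nat set option \<Rightarrow> real" where
  "crp_weight a \<theta> p N P x =
     (let n = N div p; c = real N + (real n + 1) * \<theta> in
      case x of
        None \<Rightarrow> ((real n + 1) * \<theta> + real (card P) * a) / c
      | Some t \<Rightarrow> (if t \<in> P then (real (card t) - a) / c else 0))"

definition crp_insert :: "nat \<Rightarrow> nat set set \<Rightarrow> nat set option \<Rightarrow> nat set set" where
  "crp_insert N P x =
     (case x of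
        None \<Rightarrow> insert {N + 1} P
      | Some t \<Rightarrow> insert (insert (N + 1) t) (P - {t}))"

definition crp_step :: "real \<Rightarrow> real \<Rightarrow> nat \<Rightarrow> nat \<Rightarrow> nat set set \<Rightarrow> nat set set pmf" where
  "crp_step a \<theta> p N P = map_pmf (crp_insert N P) (embed_pmf (crp_weight a \<theta> p N P))"

fun crp :: "real \<Rightarrow> real \<Rightarrow> nat \<Rightarrow> nat \<Rightarrow> nat set set pmf" where
  "crp a \<theta> p 0 = return_pmf {}"
| "crp a \<theta> p (Suc 0) = return_pmf {{1}}"
| "crp a \<theta> p (Suc (Suc N)) = crp a \<theta> p (Suc N) \<bind> crp_step a \<theta> p (Suc N)"

fun crp_path :: "real \<Rightarrow> real \<Rightarrow> nat \<Rightarrow> nat \<Rightarrow> nat set set list pmf" where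
  "crp_path a \<theta> p 0 = return_pmf []"
| "crp_path a \<theta> p (Suc 0) = return_pmf [{{1}}]"
| "crp_path a \<theta> p (Suc (Suc N)) =
     crp_path a \<theta> p (Suc N) \<bind>
       (\<lambda>ps. map_pmf (\<lambda>Q. ps @ [Q]) (crp_step a \<theta> p (Suc N) (last ps)))"

text \<open>Vertices: ordinary nodes Ord i (i \<ge> 1), roots Root j
  (Root 0 is the original root, Root j for j \<ge> 1 is the j-th immigrant root).
  A forest at time N is the list of parents of the ordinary nodes 1..N:
  xs ! (i - 1) is the parent of node i. At time N the roots present are
  Root 0, ..., Root (N div p).\<close>

datatype vertex = Ord nat | Root nat

definition outdeg :: "vertex list \<Rightarrow> vertex \<Rightarrow> nat" where
  "outdeg xs v = card {i \<in> {1..length xs}. xs ! (i - 1) = v}"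

definition gport_weight :: "real \<Rightarrow> real \<Rightarrow> nat \<Rightarrow> vertex list \<Rightarrow> vertex \<Rightarrow> real" where
  "gport_weight \<alpha> l p xs v =
     (let N = length xs; C = (1 + \<alpha>) * real N + (real (N div p) + 1) * l in
      case v of
        Ord i \<Rightarrow> (if 1 \<le> i \<and> i \<le> N then (real (outdeg xs v) + \<alpha>) / C else 0)
      | Root j \<Rightarrow> (if j \<le> N div p then (real (outdeg xs v) + l) / C else 0))"

definition gport_attach :: "real \<Rightarrow> real \<Rightarrow> nat \<Rightarrow> vertex list \<Rightarrow> vertex pmf" where
  "gport_attach \<alpha> l p xs = embed_pmf (gport_weight \<alpha> l p xs)"

fun gport :: "real \<Rightarrow> real \<Rightarrow> nat \<Rightarrow> nat \<Rightarrow> vertex list pmf" where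
  "gport \<alpha> l p 0 = return_pmf []"
| "gport \<alpha> l p (Suc N) =
     gport \<alpha> l p N \<bind> (\<lambda>xs. map_pmf (\<lambda>v. xs @ [v]) (gport_attach \<alpha> l p xs))"

fun gport_path :: "real \<Rightarrow> real \<Rightarrow> nat \<Rightarrow> nat \<Rightarrow> vertex list list pmf" where
  "gport_path \<alpha> l p 0 = return_pmf [[]]"
| "gport_path \<alpha> l p (Suc N) =
     gport_path \<alpha> l p N \<bind>
       (\<lambda>fs. map_pmf (\<lambda>v. fs @ [last fs @ [v]]) (gport_attach \<alpha> l p (last fs)))"

definition ord_edges :: "vertex list \<Rightarrow> (nat \<times> nat) set" where
  "ord_edges xs = {(i, j). i \<in> {1..length xs} \<and> xs ! (i - 1) = Ord j}"

definition branch_partition :: "vertex list \<Rightarrow> nat set set" where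
  "branch_partition xs =
     {{i \<in> {1..length xs}. (i, c) \<in> (ord_edges xs)\<^sup>*} | c.
        c \<in> {1..length xs} \<and> (\<exists>j. xs ! (c - 1) = Root j)}"

end

theory Submission
  imports Defs
begin

definition valid :: "nat \<Rightarrow> vertex list \<Rightarrow> bool" where
  "valid p xs \<longleftrightarrow> (\<forall>i\<in>{1..length xs}. case xs ! (i - 1) of
      Ord j \<Rightarrow> 1 \<le> j \<and> j < i | Root j \<Rightarrow> j \<le> (i - 1) div p)"

definition tops :: "vertex list \<Rightarrow> nat set" where
  "tops xs = {c \<in> {1..length xs}. \<exists>j. xs ! (c - 1) = Root j}"

definition R :: "vertex list \<Rightarrow> nat \<Rightarrow> nat set" where
  "R xs c = {i \<in> {1..length xs}. (i, c) \<in> (ord_edges xs)\<^sup>*}"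

lemma bp_eq: "branch_partition xs = R xs ` tops xs"
  unfolding branch_partition_def R_def tops_def by blast

lemma edge_lt:
  assumes "valid p xs" "(i, j) \<in> ord_edges xs"
  shows "j < i \<and> 1 \<le> j \<and> 1 \<le> i \<and> i \<le> length xs"
proof -
  have i: "i \<in> {1..length xs}" and e: "xs ! (i - 1) = Ord j" using assms(2) by (auto simp: ord_edges_def)
  then show ?thesis using assms(1) unfolding valid_def by (auto dest!: bspec[of _ _ i])
qed

lemma rt_range:
  assumes "valid p xs" "(i, c) \<in> (ord_edges xs)\<^sup>*" "i \<in> {1..length xs}"
  shows "c \<in> {1..length xs} \<and> c \<le> i"
  using assms(2,3)
proof (induction rule: converse_rtrancl_induct)
  case base then show ?case by auto
next
  case (step y z)
  then show ?case using edge_lt[OF assms(1) step(1)] by auto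
qed

lemma top_nosucc: "c \<in> tops xs \<Longrightarrow> (c, d) \<notin> ord_edges xs"
  unfolding tops_def ord_edges_def by auto

lemma edge_fun: "(i, j) \<in> ord_edges xs \<Longrightarrow> (i, k) \<in> ord_edges xs \<Longrightarrow> j = k"
  unfolding ord_edges_def by auto

lemma top_unique:
  assumes "(i, c1) \<in> (ord_edges xs)\<^sup>*" "(i, c2) \<in> (ord_edges xs)\<^sup>*" "c1 \<in> tops xs" "c2 \<in> tops xs"
  shows "c1 = c2"
  using assms(1,2)
proof (induction arbitrary: rule: converse_rtrancl_induct)
  case base
  then show ?case using top_nosucc[OF assms(3)] by (auto elim: converse_rtranclE)
next
  case (step y z)
  from step.prems show ?case
  proof (cases rule: converse_rtranclE)
    case base then show ?thesis using top_nosucc[OF assms(4)] step(1) by auto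
  next
    case (step w)
    then have "w = z" using edge_fun \<open>(y, z) \<in> ord_edges xs\<close> by blast
    then show ?thesis using step \<open>(z, c2) \<in> (ord_edges xs)\<^sup>* \<Longrightarrow> c1 = c2\<close> by auto
  qed
qed

lemma top_exists:
  assumes "valid p xs" "i \<in> {1..length xs}"
  shows "\<exists>c\<in>tops xs. (i, c) \<in> (ord_edges xs)\<^sup>*"
  using assms(2)
proof (induction i rule: less_induct)
  case (less i)
  show ?case
  proof (cases "xs ! (i - 1)")
    case (Ord j)
    then have "1 \<le> j" "j < i" using assms(1) less.prems unfolding valid_def by (auto dest!: bspec[of _ _ i])
    then obtain c where "c \<in> tops xs" "(j, c) \<in> (ord_edges xs)\<^sup>*" using less.IH[of j] less.prems by auto
    moreover have "(i, j) \<in> ord_edges xs" using Ord less.prems by (auto simp: ord_edges_def)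
    ultimately show ?thesis by (meson converse_rtrancl_into_rtrancl)
  next
    case (Root j)
    then have "i \<in> tops xs" using less.prems by (auto simp: tops_def)
    then show ?thesis by auto
  qed
qed

lemma top_in_R: "c \<in> tops xs \<Longrightarrow> c \<in> R xs c"
  unfolding tops_def R_def by auto

lemma R_inj: "inj_on (R xs) (tops xs)"
proof (rule inj_onI)
  fix c1 c2 assume a: "c1 \<in> tops xs" "c2 \<in> tops xs" "R xs c1 = R xs c2"
  then have "c1 \<in> R xs c2" using top_in_R by metis
  then have "(c1, c2) \<in> (ord_edges xs)\<^sup>*" by (auto simp: R_def)
  then show "c1 = c2" using top_unique[of c1 c1 xs c2] a by auto
qed

lemma finite_R: "finite (R xs c)" by (auto simp: R_def)
lemma finite_tops: "finite (tops xs)" by (auto simp: tops_def)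

definition vok :: "nat \<Rightarrow> nat \<Rightarrow> vertex \<Rightarrow> bool" where
  "vok p N v \<longleftrightarrow> (case v of Ord j \<Rightarrow> 1 \<le> j \<and> j \<le> N | Root j \<Rightarrow> j \<le> N div p)"

lemma valid_snoc: "valid p xs \<Longrightarrow> vok p (length xs) v \<Longrightarrow> valid p (xs @ [v])"
proof -
  assume a: "valid p xs" "vok p (length xs) v"
  show ?thesis unfolding valid_def
  proof
    fix i assume i: "i \<in> {1..length (xs @ [v])}"
    show "case (xs @ [v]) ! (i - 1) of Ord j \<Rightarrow> 1 \<le> j \<and> j < i | Root j \<Rightarrow> j \<le> (i - 1) div p"
    proof (cases "i \<le> length xs")
      case True
      then have "(xs @ [v]) ! (i - 1) = xs ! (i - 1)" using i by (auto simp: nth_append)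
      then show ?thesis using a(1) i True unfolding valid_def by auto
    next
      case False
      then have "i = Suc (length xs)" using i by auto
      then have "(xs @ [v]) ! (i - 1) = v" by simp
      then show ?thesis using a(2) \<open>i = Suc (length xs)\<close> unfolding vok_def by (auto split: vertex.splits)
    qed
  qed
qed

lemma edges_snoc: "ord_edges (xs @ [v]) = ord_edges xs \<union> (case v of Ord j \<Rightarrow> {(Suc (length xs), j)} | Root _ \<Rightarrow> {})"
  unfolding ord_edges_def
  by (auto simp: nth_append le_Suc_eq split: vertex.splits if_splits)

lemma rt_old:
  assumes "valid p xs" "(i, c) \<in> (ord_edges (xs @ [v]))\<^sup>*" "i \<le> length xs"
  shows "(i, c) \<in> (ord_edges xs)\<^sup>*"
  using assms(2,3)
proof (induction rule: converse_rtrancl_induct)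
  case base then show ?case by auto
next
  case (step y z)
  then have "(y, z) \<in> ord_edges xs" using edges_snoc[of xs v] by (auto split: vertex.splits)
  then show ?case using edge_lt[OF assms(1)] step by (meson converse_rtrancl_into_rtrancl less_imp_le_nat order.strict_trans2)
qed

lemma rt_old_iff:
  assumes "valid p xs" "i \<le> length xs"
  shows "(i, c) \<in> (ord_edges (xs @ [v]))\<^sup>* \<longleftrightarrow> (i, c) \<in> (ord_edges xs)\<^sup>*"
  using rt_old[OF assms(1) _ assms(2)] rtrancl_mono[of "ord_edges xs" "ord_edges (xs @ [v])"]
  by (auto simp: edges_snoc)

lemma rt_new:
  assumes "valid p xs" "vok p (length xs) v"
  shows "(Suc (length xs), c) \<in> (ord_edges (xs @ [v]))\<^sup>* \<longleftrightarrow>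
     c = Suc (length xs) \<or> (\<exists>j. v = Ord j \<and> (j, c) \<in> (ord_edges xs)\<^sup>*)"
proof
  assume "(Suc (length xs), c) \<in> (ord_edges (xs @ [v]))\<^sup>*"
  then show "c = Suc (length xs) \<or> (\<exists>j. v = Ord j \<and> (j, c) \<in> (ord_edges xs)\<^sup>*)"
  proof (cases rule: converse_rtranclE)
    case base then show ?thesis by simp
  next
    case (step y)
    have "(Suc (length xs), y) \<notin> ord_edges xs" using edge_lt[OF assms(1)] by fastforce
    then obtain j where "v = Ord j" "y = j" using step(1) by (auto simp: edges_snoc split: vertex.splits)
    moreover have "j \<le> length xs" using \<open>v = Ord j\<close> assms(2) by (auto simp: vok_def)
    ultimately show ?thesis using rt_old[OF assms(1) step(2)] by auto
  qed
next
  assume "c = Suc (length xs) \<or> (\<exists>j. v = Ord j \<and> (j, c) \<in> (ord_edges xs)\<^sup>*)"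
  then show "(Suc (length xs), c) \<in> (ord_edges (xs @ [v]))\<^sup>*"
  proof
    assume "\<exists>j. v = Ord j \<and> (j, c) \<in> (ord_edges xs)\<^sup>*"
    then obtain j where j: "v = Ord j" "(j, c) \<in> (ord_edges xs)\<^sup>*" by auto
    then have "(j, c) \<in> (ord_edges (xs @ [v]))\<^sup>*" using rtrancl_mono[of "ord_edges xs" "ord_edges (xs @ [v])"] by (auto simp: edges_snoc)
    moreover have "(Suc (length xs), j) \<in> ord_edges (xs @ [v])" using j by (auto simp: edges_snoc)
    ultimately show ?thesis by (meson converse_rtrancl_into_rtrancl)
  qed simp
qed

lemma tops_snoc:
  "tops (xs @ [v]) = tops xs \<union> (case v of Root _ \<Rightarrow> {Suc (length xs)} | Ord _ \<Rightarrow> {})"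
  unfolding tops_def by (auto simp: nth_append le_Suc_eq split: vertex.splits)

lemma R_snoc_old:
  assumes "valid p xs" "vok p (length xs) v" "c \<in> tops xs"
  shows "R (xs @ [v]) c = R xs c \<union> (if \<exists>j. v = Ord j \<and> (j, c) \<in> (ord_edges xs)\<^sup>* then {Suc (length xs)} else {})"
proof -
  have "c \<le> length xs" using assms(3) by (auto simp: tops_def)
  then show ?thesis
    unfolding R_def using rt_old_iff[OF assms(1)] rt_new[OF assms(1,2), of c]
    by (auto simp: le_Suc_eq)
qed

lemma R_snoc_new:
  assumes "valid p xs" "vok p (length xs) v"
  shows "R (xs @ [v]) (Suc (length xs)) = {Suc (length xs)}"
proof -
  have "i = Suc (length xs)" if "i \<in> {1..Suc (length xs)}" "(i, Suc (length xs)) \<in> (ord_edges (xs @ [v]))\<^sup>*" for i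
  proof (rule ccontr)
    assume "i \<noteq> Suc (length xs)"
    then have "i \<in> {1..length xs}" using that by auto
    then show False using rt_old[OF assms(1) that(2)] rt_range[OF assms(1)] by fastforce
  qed
  then show ?thesis unfolding R_def by auto
qed

definition blk :: "vertex list \<Rightarrow> vertex \<Rightarrow> nat set option" where
  "blk xs v = (case v of Root _ \<Rightarrow> None | Ord j \<Rightarrow> Some (THE t. t \<in> branch_partition xs \<and> j \<in> t))"

lemma block_of:
  assumes "valid p xs" "j \<in> {1..length xs}" "c \<in> tops xs" "(j, c) \<in> (ord_edges xs)\<^sup>*"
  shows "(THE t. t \<in> branch_partition xs \<and> j \<in> t) = R xs c"
proof (rule the_equality)
  show "R xs c \<in> branch_partition xs \<and> j \<in> R xs c" using assms by (auto simp: bp_eq R_def)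
next
  fix t assume "t \<in> branch_partition xs \<and> j \<in> t"
  then obtain c' where "c' \<in> tops xs" "t = R xs c'" "(j, c') \<in> (ord_edges xs)\<^sup>*" by (auto simp: bp_eq R_def)
  then show "t = R xs c" using top_unique[OF assms(4)] assms(3) by metis
qed

lemma bp_snoc:
  assumes "valid p xs" "vok p (length xs) v"
  shows "branch_partition (xs @ [v]) = crp_insert (length xs) (branch_partition xs) (blk xs v)"
proof (cases v)
  case (Root j)
  have "R (xs @ [v]) c = R xs c" if "c \<in> tops xs" for c
    using R_snoc_old[OF assms that] Root by auto
  then have "R (xs @ [v]) ` tops xs = R xs ` tops xs" by auto
  then show ?thesis using Root R_snoc_new[OF assms]
    by (simp add: bp_eq tops_snoc blk_def crp_insert_def)
next
  case (Ord j)
  then have j: "j \<in> {1..length xs}" using assms(2) by (auto simp: vok_def)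
  obtain c0 where c0: "c0 \<in> tops xs" "(j, c0) \<in> (ord_edges xs)\<^sup>*" using top_exists[OF assms(1) j] by auto
  have b: "blk xs v = Some (R xs c0)" using Ord block_of[OF assms(1) j c0] by (simp add: blk_def)
  have R0: "R (xs @ [v]) c0 = insert (Suc (length xs)) (R xs c0)"
    using R_snoc_old[OF assms c0(1)] Ord c0 by auto
  have R1: "R (xs @ [v]) c = R xs c" if "c \<in> tops xs - {c0}" for c
    using R_snoc_old[OF assms, of c] Ord that top_unique[OF c0(2) _ c0(1)] by auto
  have "R xs ` tops xs - {R xs c0} = R xs ` (tops xs - {c0})"
    using R_inj[of xs] c0(1) by (auto simp: inj_on_def)
  moreover have "R (xs @ [v]) ` (tops xs - {c0}) = R xs ` (tops xs - {c0})" using R1 by auto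
  moreover have "tops xs = insert c0 (tops xs - {c0})" using c0 by auto
  ultimately have "R (xs @ [v]) ` tops xs = insert (R (xs @ [v]) c0) (R (xs @ [v]) ` (tops xs - {c0}))"
    by (metis image_insert)
  also have "\<dots> = insert (insert (Suc (length xs)) (R xs c0)) (R xs ` tops xs - {R xs c0})"
    using R0 \<open>R xs ` tops xs - {R xs c0} = R xs ` (tops xs - {c0})\<close>
      \<open>R (xs @ [v]) ` (tops xs - {c0}) = R xs ` (tops xs - {c0})\<close> by simp
  finally show ?thesis using Ord b
    by (simp add: bp_eq tops_snoc crp_insert_def)
qed

lemma card_fibres:
  assumes "finite A" "finite K"
  shows "(\<Sum>v\<in>A. card {k\<in>K. g k = v}) = card {k\<in>K. g k \<in> A}"
  using assms(1)
proof (induction A rule: finite_induct)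
  case empty then show ?case by simp
next
  case (insert x F)
  have "{k\<in>K. g k \<in> insert x F} = {k\<in>K. g k = x} \<union> {k\<in>K. g k \<in> F}" by auto
  moreover have "card ({k\<in>K. g k = x} \<union> {k\<in>K. g k \<in> F}) = card {k\<in>K. g k = x} + card {k\<in>K. g k \<in> F}"
    using insert assms(2) by (intro card_Un_disjoint) auto
  ultimately show ?case using insert by simp
qed

definition Vset :: "nat \<Rightarrow> nat \<Rightarrow> vertex set" where
  "Vset p N = Ord ` {1..N} \<union> Root ` {0..N div p}"

lemma Vset_vok: "v \<in> Vset p N \<longleftrightarrow> vok p N v"
  unfolding Vset_def vok_def by (cases v) auto

lemma finite_Vset: "finite (Vset p N)" by (simp add: Vset_def)

lemma weight_zero: "v \<notin> Vset p (length xs) \<Longrightarrow> gport_weight \<alpha> l p xs v = 0"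
  unfolding Vset_def gport_weight_def Let_def by (cases v) auto

lemma weight_nonneg:
  assumes "\<alpha> > 0" "l > 0"
  shows "gport_weight \<alpha> l p xs v \<ge> 0"
proof -
  have "(1 + \<alpha>) * real (length xs) + (real (length xs div p) + 1) * l > 0" using assms
    by (intro add_nonneg_pos) auto
  then show ?thesis using assms unfolding gport_weight_def Let_def by (cases v) auto
qed

lemma deg_all:
  assumes "valid p xs"
  shows "{k\<in>{1..length xs}. xs ! (k - 1) \<in> Vset p (length xs)} = {1..length xs}"
proof -
  have "xs ! (k - 1) \<in> Vset p (length xs)" if "k \<in> {1..length xs}" for k
  proof -
    have "(k - 1) div p \<le> length xs div p" using that by (intro div_le_mono) auto
    moreover have "case xs ! (k - 1) of Ord j \<Rightarrow> 1 \<le> j \<and> j < k | Root j \<Rightarrow> j \<le> (k - 1) div p"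
      using assms that unfolding valid_def by blast
    ultimately show ?thesis using that unfolding Vset_vok vok_def
      by (auto split: vertex.splits)
  qed
  then show ?thesis by auto
qed

lemma sum_outdeg:
  assumes "finite A"
  shows "(\<Sum>v\<in>A. outdeg xs v) = card {k\<in>{1..length xs}. xs ! (k - 1) \<in> A}"
  unfolding outdeg_def using card_fibres[OF assms, of "{1..length xs}"] by simp

lemma sum_weight_all:
  assumes "\<alpha> > 0" "l > 0" "valid p xs"
  shows "(\<Sum>v\<in>Vset p (length xs). gport_weight \<alpha> l p xs v) = 1"
proof -
  define N where "N = length xs"
  define C where "C = (1 + \<alpha>) * real N + (real (N div p) + 1) * l"
  have Cpos: "C > 0" unfolding C_def using assms by (intro add_nonneg_pos) auto
  have inj: "Ord ` {1..N} \<inter> Root ` {0..N div p} = {}" by auto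
  have e0: "(\<Sum>v\<in>Vset p N. gport_weight \<alpha> l p xs v)
     = (\<Sum>v\<in>Ord ` {1..N}. gport_weight \<alpha> l p xs v) + (\<Sum>v\<in>Root ` {0..N div p}. gport_weight \<alpha> l p xs v)"
    unfolding Vset_def by (rule sum.union_disjoint) auto
  have e1: "(\<Sum>v\<in>Ord ` {1..N}. gport_weight \<alpha> l p xs v) = (\<Sum>v\<in>Ord ` {1..N}. (real (outdeg xs v) + \<alpha>) / C)"
    by (rule sum.cong) (auto simp: gport_weight_def Let_def C_def N_def)
  have e2: "(\<Sum>v\<in>Ord ` {1..N}. (real (outdeg xs v) + \<alpha>) / C) = (real (\<Sum>v\<in>Ord ` {1..N}. outdeg xs v) + real N * \<alpha>) / C"
    by (simp add: sum_divide_distrib[symmetric] sum.distrib card_image inj_on_def)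
  have e3: "(\<Sum>v\<in>Root ` {0..N div p}. gport_weight \<alpha> l p xs v) = (\<Sum>v\<in>Root ` {0..N div p}. (real (outdeg xs v) + l) / C)"
    by (rule sum.cong) (auto simp: gport_weight_def Let_def C_def N_def)
  have e4: "(\<Sum>v\<in>Root ` {0..N div p}. (real (outdeg xs v) + l) / C) = (real (\<Sum>v\<in>Root ` {0..N div p}. outdeg xs v) + (real (N div p) + 1) * l) / C"
    by (simp add: sum_divide_distrib[symmetric] sum.distrib card_image inj_on_def)
  have eq: "(\<Sum>v\<in>Vset p N. gport_weight \<alpha> l p xs v) =
      (real (\<Sum>v\<in>Ord ` {1..N}. outdeg xs v) + real N * \<alpha>) / C +
      (real (\<Sum>v\<in>Root ` {0..N div p}. outdeg xs v) + (real (N div p) + 1) * l) / C"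
    unfolding e0 e1 e2 e3 e4 ..
  have "(\<Sum>v\<in>Ord ` {1..N}. outdeg xs v) + (\<Sum>v\<in>Root ` {0..N div p}. outdeg xs v)
       = (\<Sum>v\<in>Vset p N. outdeg xs v)"
    unfolding Vset_def by (rule sum.union_disjoint[symmetric]) auto
  also have "\<dots> = N" using sum_outdeg[OF finite_Vset, of xs p] deg_all[OF assms(3)] N_def by simp
  finally have "real (\<Sum>v\<in>Ord ` {1..N}. outdeg xs v) + real (\<Sum>v\<in>Root ` {0..N div p}. outdeg xs v) = real N"
    by (metis of_nat_add)
  then have num: "(real (\<Sum>v\<in>Ord ` {1..N}. outdeg xs v) + real N * \<alpha>) +
      (real (\<Sum>v\<in>Root ` {0..N div p}. outdeg xs v) + (real (N div p) + 1) * l) = C"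
    unfolding C_def by (simp add: ring_distribs)
  have "(\<Sum>v\<in>Vset p N. gport_weight \<alpha> l p xs v) = C / C"
    unfolding eq add_divide_distrib[symmetric] num ..
  then show ?thesis using Cpos unfolding N_def by simp
qed

lemma attach_props:
  assumes "\<alpha> > 0" "l > 0" "valid p xs"
  shows "pmf (gport_attach \<alpha> l p xs) v = gport_weight \<alpha> l p xs v"
    and "set_pmf (gport_attach \<alpha> l p xs) \<subseteq> Vset p (length xs)"
proof -
  have nn: "\<And>x. 0 \<le> gport_weight \<alpha> l p xs x" using weight_nonneg[OF assms(1,2)] by blast
  have "(\<integral>\<^sup>+x. ennreal (gport_weight \<alpha> l p xs x) \<partial>count_space UNIV)
      = (\<Sum>x\<in>Vset p (length xs). ennreal (gport_weight \<alpha> l p xs x))"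
    by (rule nn_integral_count_space') (auto simp: finite_Vset weight_zero)
  also have "\<dots> = 1" using nn sum_weight_all[OF assms] by simp
  finally have int: "(\<integral>\<^sup>+x. ennreal (gport_weight \<alpha> l p xs x) \<partial>count_space UNIV) = 1" .
  show "pmf (gport_attach \<alpha> l p xs) v = gport_weight \<alpha> l p xs v"
    unfolding gport_attach_def using pmf_embed_pmf[OF nn int] .
  show "set_pmf (gport_attach \<alpha> l p xs) \<subseteq> Vset p (length xs)"
    unfolding gport_attach_def using set_embed_pmf[OF nn int] weight_zero by blast
qed

lemma measure_restrict:
  assumes "set_pmf q \<subseteq> S"
  shows "measure (measure_pmf q) A = measure (measure_pmf q) (A \<inter> S)"
proof -
  have "A \<inter> set_pmf q = (A \<inter> S) \<inter> set_pmf q" using assms by blast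
  then show ?thesis by (metis measure_Int_set_pmf)
qed

lemma the_block:
  assumes "valid p xs" "i \<in> {1..length xs}" "t \<in> branch_partition xs"
  shows "(THE t'. t' \<in> branch_partition xs \<and> i \<in> t') = t \<longleftrightarrow> i \<in> t"
proof -
  obtain c0 where c0: "c0 \<in> tops xs" "(i, c0) \<in> (ord_edges xs)\<^sup>*" using top_exists[OF assms(1,2)] by auto
  have th: "(THE t'. t' \<in> branch_partition xs \<and> i \<in> t') = R xs c0" using block_of[OF assms(1,2) c0] .
  obtain c where c: "c \<in> tops xs" "t = R xs c" using assms(3) by (auto simp: bp_eq)
  have "i \<in> t \<longleftrightarrow> c = c0"
  proof
    assume "i \<in> t" then have "(i, c) \<in> (ord_edges xs)\<^sup>*" using c by (auto simp: R_def)
    then show "c = c0" using top_unique[OF _ c0(2) c(1) c0(1)] by blast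
  next
    assume "c = c0" then show "i \<in> t" using c c0 assms(2) by (auto simp: R_def)
  qed
  moreover have "R xs c0 = R xs c \<longleftrightarrow> c = c0" using R_inj[of xs] c c0 by (auto simp: inj_on_def)
  ultimately show ?thesis using th c by auto
qed

lemma blk_in:
  assumes "valid p xs" "i \<in> {1..length xs}"
  shows "(THE t'. t' \<in> branch_partition xs \<and> i \<in> t') \<in> branch_partition xs"
proof -
  obtain c0 where c0: "c0 \<in> tops xs" "(i, c0) \<in> (ord_edges xs)\<^sup>*" using top_exists[OF assms(1,2)] by auto
  then show ?thesis using block_of[OF assms(1,2) c0] by (auto simp: bp_eq)
qed

lemma block_sub: "t \<in> branch_partition xs \<Longrightarrow> t \<subseteq> {1..length xs}"
  by (auto simp: bp_eq R_def)

lemma pre_None: "blk xs -` {None} \<inter> Vset p N = Root ` {0..N div p}"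
  by (auto simp: blk_def Vset_def split: vertex.splits)

lemma pre_Some_in:
  assumes "valid p xs" "t \<in> branch_partition xs"
  shows "blk xs -` {Some t} \<inter> Vset p (length xs) = Ord ` t"
proof -
  have sub: "t \<subseteq> {1..length xs}" using block_sub[OF assms(2)] .
  show ?thesis
  proof
    show "blk xs -` {Some t} \<inter> Vset p (length xs) \<subseteq> Ord ` t"
    proof
      fix v assume v: "v \<in> blk xs -` {Some t} \<inter> Vset p (length xs)"
      then obtain i where i: "v = Ord i" "i \<in> {1..length xs}" by (auto simp: Vset_def blk_def)
      then have "(THE t'. t' \<in> branch_partition xs \<and> i \<in> t') = t" using v by (auto simp: blk_def)
      then have "i \<in> t" using the_block[OF assms(1) i(2) assms(2)] by simp
      then show "v \<in> Ord ` t" using i by auto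
    qed
  next
    show "Ord ` t \<subseteq> blk xs -` {Some t} \<inter> Vset p (length xs)"
    proof
      fix v assume "v \<in> Ord ` t"
      then obtain i where i: "v = Ord i" "i \<in> t" by auto
      then have i2: "i \<in> {1..length xs}" using sub by auto
      have "(THE t'. t' \<in> branch_partition xs \<and> i \<in> t') = t" using the_block[OF assms(1) i2 assms(2)] i by simp
      then show "v \<in> blk xs -` {Some t} \<inter> Vset p (length xs)" using i i2 by (auto simp: blk_def Vset_def)
    qed
  qed
qed

lemma pre_Some_out:
  assumes "valid p xs" "t \<notin> branch_partition xs"
  shows "blk xs -` {Some t} \<inter> Vset p (length xs) = {}"
proof -
  have "False" if vv: "v \<in> blk xs -` {Some t} \<inter> Vset p (length xs)" for v
  proof -
    obtain i where i: "v = Ord i" "i \<in> {1..length xs}" using vv by (cases v) (auto simp: Vset_def blk_def)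
    then have "(THE t'. t' \<in> branch_partition xs \<and> i \<in> t') = t" using vv by (auto simp: blk_def)
    then show False using blk_in[OF assms(1) i(2)] assms(2) by simp
  qed
  then show ?thesis by blast
qed

lemma block_deg:
  assumes "valid p xs" "c \<in> tops xs"
  shows "{k\<in>{1..length xs}. xs ! (k - 1) \<in> Ord ` R xs c} = R xs c - {c}"
proof
  show "{k\<in>{1..length xs}. xs ! (k - 1) \<in> Ord ` R xs c} \<subseteq> R xs c - {c}"
  proof
    fix k assume k: "k \<in> {k\<in>{1..length xs}. xs ! (k - 1) \<in> Ord ` R xs c}"
    then obtain i where i: "xs ! (k - 1) = Ord i" "i \<in> R xs c" by auto
    then have "(k, i) \<in> ord_edges xs" using k by (auto simp: ord_edges_def)
    moreover have "(i, c) \<in> (ord_edges xs)\<^sup>*" using i by (auto simp: R_def)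
    ultimately have "(k, c) \<in> (ord_edges xs)\<^sup>*" by (meson converse_rtrancl_into_rtrancl)
    moreover have "k \<noteq> c" using assms(2) i(1) by (auto simp: tops_def)
    ultimately show "k \<in> R xs c - {c}" using k by (auto simp: R_def)
  qed
next
  show "R xs c - {c} \<subseteq> {k\<in>{1..length xs}. xs ! (k - 1) \<in> Ord ` R xs c}"
  proof
    fix k assume k: "k \<in> R xs c - {c}"
    then have kr: "(k, c) \<in> (ord_edges xs)\<^sup>*" "k \<noteq> c" "k \<in> {1..length xs}" by (auto simp: R_def)
    from kr(1) obtain y where y: "(k, y) \<in> ord_edges xs" "(y, c) \<in> (ord_edges xs)\<^sup>*"
      using kr(2) by (cases rule: converse_rtranclE) auto
    have "y \<in> {1..length xs}" using edge_lt[OF assms(1) y(1)] by auto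
    then have "y \<in> R xs c" using y(2) by (auto simp: R_def)
    moreover have "xs ! (k - 1) = Ord y" using y(1) by (auto simp: ord_edges_def)
    ultimately show "k \<in> {k\<in>{1..length xs}. xs ! (k - 1) \<in> Ord ` R xs c}" using kr by auto
  qed
qed

lemma root_deg:
  assumes "valid p xs"
  shows "{k\<in>{1..length xs}. xs ! (k - 1) \<in> Root ` {0..length xs div p}} = tops xs"
proof
  show "tops xs \<subseteq> {k\<in>{1..length xs}. xs ! (k - 1) \<in> Root ` {0..length xs div p}}"
  proof
    fix k assume k: "k \<in> tops xs"
    then obtain j where j: "xs ! (k - 1) = Root j" "k \<in> {1..length xs}" by (auto simp: tops_def)
    have "case xs ! (k - 1) of Ord j \<Rightarrow> 1 \<le> j \<and> j < k | Root j \<Rightarrow> j \<le> (k - 1) div p"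
      using assms j(2) unfolding valid_def by blast
    then have "j \<le> (k - 1) div p" using j by simp
    moreover have "(k - 1) div p \<le> length xs div p" using j(2) by (intro div_le_mono) auto
    ultimately show "k \<in> {k\<in>{1..length xs}. xs ! (k - 1) \<in> Root ` {0..length xs div p}}" using j by auto
  qed
qed (auto simp: tops_def)

lemma arith1:
  fixes \<beta> l N n m :: real
  assumes "\<beta> > 0" "l > 0" "N \<ge> 0" "n \<ge> 0"
  shows "((n + 1) * (l / \<beta>) + m * (1 / \<beta>)) / (N + (n + 1) * (l / \<beta>))
       = (m + (n + 1) * l) / (\<beta> * N + (n + 1) * l)"
proof -
  have p2: "\<beta> * N + (n + 1) * l > 0" using assms by (intro add_nonneg_pos) auto
  have "N + (n + 1) * (l / \<beta>) = (\<beta> * N + (n + 1) * l) / \<beta>"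
    using assms(1) by (simp add: field_simps)
  moreover have "(n + 1) * (l / \<beta>) + m * (1 / \<beta>) = (m + (n + 1) * l) / \<beta>"
    using assms(1) by (simp add: field_simps)
  ultimately show ?thesis using assms(1) p2 by simp
qed

lemma arith2:
  fixes \<beta> l N n k :: real
  assumes "\<beta> > 0" "l > 0" "N \<ge> 0" "n \<ge> 0"
  shows "(k - 1 / \<beta>) / (N + (n + 1) * (l / \<beta>))
       = (k * \<beta> - 1) / (\<beta> * N + (n + 1) * l)"
proof -
  have p2: "\<beta> * N + (n + 1) * l > 0" using assms by (intro add_nonneg_pos) auto
  have "N + (n + 1) * (l / \<beta>) = (\<beta> * N + (n + 1) * l) / \<beta>"
    using assms(1) by (simp add: field_simps)
  moreover have "k - 1 / \<beta> = (k * \<beta> - 1) / \<beta>"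
    using assms(1) by (simp add: field_simps)
  ultimately show ?thesis using assms(1) p2 by simp
qed

lemma weight_identity:
  assumes "\<alpha> > 0" "l > 0" "valid p xs" "a = 1 / (1 + \<alpha>)" "\<theta> = l / (1 + \<alpha>)"
  shows "crp_weight a \<theta> p (length xs) (branch_partition xs) x
       = pmf (map_pmf (blk xs) (gport_attach \<alpha> l p xs)) x"
proof -
  define q where "q = gport_attach \<alpha> l p xs"
  define N where "N = length xs"
  define C where "C = (1 + \<alpha>) * real N + (real (N div p) + 1) * l"
  define P where "P = branch_partition xs"
  have b1: "0 < 1 + \<alpha>" using assms(1) by simp
  have gen: "pmf (map_pmf (blk xs) q) y = (\<Sum>v\<in>blk xs -` {y} \<inter> Vset p N. gport_weight \<alpha> l p xs v)" for y
  proof -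
    have "pmf (map_pmf (blk xs) q) y = measure (measure_pmf q) (blk xs -` {y})" by (rule pmf_map)
    also have "\<dots> = measure (measure_pmf q) (blk xs -` {y} \<inter> Vset p N)"
      using measure_restrict attach_props(2)[OF assms(1-3)] unfolding q_def N_def by blast
    also have "\<dots> = (\<Sum>v\<in>blk xs -` {y} \<inter> Vset p N. pmf q v)"
      by (rule measure_measure_pmf_finite) (simp add: finite_Vset)
    also have "\<dots> = (\<Sum>v\<in>blk xs -` {y} \<inter> Vset p N. gport_weight \<alpha> l p xs v)"
      using attach_props(1)[OF assms(1-3)] unfolding q_def by simp
    finally show ?thesis .
  qed
  show ?thesis
  proof (cases x)
    case None
    have "(\<Sum>v\<in>Root ` {0..N div p}. gport_weight \<alpha> l p xs v) = (\<Sum>v\<in>Root ` {0..N div p}. (real (outdeg xs v) + l) / C)"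
      by (rule sum.cong) (auto simp: gport_weight_def Let_def C_def N_def)
    also have "\<dots> = (real (\<Sum>v\<in>Root ` {0..N div p}. outdeg xs v) + (real (N div p) + 1) * l) / C"
      by (simp add: sum_divide_distrib[symmetric] sum.distrib card_image inj_on_def)
    also have "(\<Sum>v\<in>Root ` {0..N div p}. outdeg xs v) = card (tops xs)"
      using sum_outdeg[of "Root ` {0..N div p}" xs] root_deg[OF assms(3)] N_def by simp
    also have "card (tops xs) = card P" unfolding P_def bp_eq using card_image[OF R_inj] by simp
    finally have s: "(\<Sum>v\<in>Root ` {0..N div p}. gport_weight \<alpha> l p xs v) = (real (card P) + (real (N div p) + 1) * l) / C" .
    show ?thesis
      unfolding None q_def[symmetric] gen pre_None s
      unfolding crp_weight_def Let_def C_def N_def[symmetric] P_def[symmetric] assms(4,5)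
      using arith1[OF b1 assms(2), of "real N" "real (N div p)" "real (card P)"] by simp
  next
    case (Some t)
    show ?thesis
    proof (cases "t \<in> P")
      case True
      then obtain c where c: "c \<in> tops xs" "t = R xs c" by (auto simp: P_def bp_eq)
      have "(\<Sum>v\<in>Ord ` t. gport_weight \<alpha> l p xs v) = (\<Sum>v\<in>Ord ` t. (real (outdeg xs v) + \<alpha>) / C)"
        using block_sub[of t xs] True unfolding P_def
        by (intro sum.cong) (auto simp: gport_weight_def Let_def C_def N_def)
      also have "\<dots> = (real (\<Sum>v\<in>Ord ` t. outdeg xs v) + real (card t) * \<alpha>) / C"
        by (simp add: sum_divide_distrib[symmetric] sum.distrib card_image inj_on_def)
      also have "(\<Sum>v\<in>Ord ` t. outdeg xs v) = card (t - {c})"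
        using sum_outdeg[of "Ord ` t" xs] block_deg[OF assms(3) c(1)] c(2) finite_R[of xs c] by simp
      also have "real (card (t - {c})) = real (card t) - 1"
      proof -
        have "c \<in> t" "finite t" using c top_in_R[OF c(1)] finite_R[of xs c] by auto
        then have "card t \<ge> 1" by (metis One_nat_def Suc_leI card_gt_0_iff empty_iff)
        then show ?thesis using \<open>c \<in> t\<close> \<open>finite t\<close> by (simp add: card_Diff_singleton of_nat_diff)
      qed
      finally have s: "(\<Sum>v\<in>Ord ` t. gport_weight \<alpha> l p xs v) = (real (card t) * (1 + \<alpha>) - 1) / C"
        by (simp add: algebra_simps)
      show ?thesis
        unfolding Some q_def[symmetric] gen N_def pre_Some_in[OF assms(3) True[unfolded P_def]]
        unfolding N_def[symmetric] s
        unfolding crp_weight_def Let_def C_def P_def[symmetric] assms(4,5)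
        using True arith2[OF b1 assms(2), of "real N" "real (N div p)" "real (card t)"] by simp
    next
      case False
      show ?thesis
        unfolding Some q_def[symmetric] gen N_def pre_Some_out[OF assms(3) False[unfolded P_def]]
        using False unfolding crp_weight_def Let_def P_def by simp
    qed
  qed
qed

lemma step_lemma:
  assumes "\<alpha> > 0" "l > 0" "valid p xs" "a = 1 / (1 + \<alpha>)" "\<theta> = l / (1 + \<alpha>)"
  shows "map_pmf (\<lambda>v. branch_partition (xs @ [v])) (gport_attach \<alpha> l p xs)
       = crp_step a \<theta> p (length xs) (branch_partition xs)"
proof -
  have "crp_weight a \<theta> p (length xs) (branch_partition xs) = pmf (map_pmf (blk xs) (gport_attach \<alpha> l p xs))"
    by (rule ext) (rule weight_identity[OF assms])
  then have e: "embed_pmf (crp_weight a \<theta> p (length xs) (branch_partition xs)) = map_pmf (blk xs) (gport_attach \<alpha> l p xs)"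
    using type_definition.Rep_inverse[OF td_pmf_embed_pmf] by metis
  have "crp_step a \<theta> p (length xs) (branch_partition xs)
      = map_pmf (\<lambda>v. crp_insert (length xs) (branch_partition xs) (blk xs v)) (gport_attach \<alpha> l p xs)"
    unfolding crp_step_def e by (simp add: map_pmf_comp)
  also have "\<dots> = map_pmf (\<lambda>v. branch_partition (xs @ [v])) (gport_attach \<alpha> l p xs)"
  proof (rule map_pmf_cong)
    fix v assume "v \<in> set_pmf (gport_attach \<alpha> l p xs)"
    then have "vok p (length xs) v" using attach_props(2)[OF assms(1-3)] Vset_vok by blast
    then show "crp_insert (length xs) (branch_partition xs) (blk xs v) = branch_partition (xs @ [v])"
      using bp_snoc[OF assms(3)] by simp
  qed simp
  finally show ?thesis by simp
qed

lemma gport_support: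
  assumes "\<alpha> > 0" "l > 0"
  shows "xs \<in> set_pmf (gport \<alpha> l p N) \<Longrightarrow> valid p xs \<and> length xs = N"
proof (induction N arbitrary: xs)
  case 0 then show ?case by (simp add: valid_def)
next
  case (Suc N)
  then obtain ys v where ys: "ys \<in> set_pmf (gport \<alpha> l p N)" "v \<in> set_pmf (gport_attach \<alpha> l p ys)" "xs = ys @ [v]"
    by auto
  have "valid p ys" "length ys = N" using Suc.IH[OF ys(1)] by auto
  moreover have "vok p (length ys) v" using attach_props(2)[OF assms \<open>valid p ys\<close>] ys(2) Vset_vok by blast
  ultimately show ?case using valid_snoc ys(3) by auto
qed

lemma gport_Suc_map:
  assumes "\<alpha> > 0" "l > 0" "a = 1 / (1 + \<alpha>)" "\<theta> = l / (1 + \<alpha>)"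
  shows "map_pmf branch_partition (gport \<alpha> l p (Suc N))
       = map_pmf branch_partition (gport \<alpha> l p N) \<bind> crp_step a \<theta> p N"
proof -
  have "map_pmf branch_partition (gport \<alpha> l p (Suc N))
      = gport \<alpha> l p N \<bind> (\<lambda>xs. map_pmf (\<lambda>v. branch_partition (xs @ [v])) (gport_attach \<alpha> l p xs))"
    by (simp add: map_bind_pmf map_pmf_comp)
  also have "\<dots> = gport \<alpha> l p N \<bind> (\<lambda>xs. crp_step a \<theta> p N (branch_partition xs))"
  proof (rule bind_pmf_cong)
    fix xs assume "xs \<in> set_pmf (gport \<alpha> l p N)"
    then have "valid p xs" "length xs = N" using gport_support[OF assms(1,2)] by auto
    then show "map_pmf (\<lambda>v. branch_partition (xs @ [v])) (gport_attach \<alpha> l p xs) = crp_step a \<theta> p N (branch_partition xs)"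
      using step_lemma[OF assms(1,2) _ assms(3,4)] by auto
  qed simp
  also have "\<dots> = map_pmf branch_partition (gport \<alpha> l p N) \<bind> crp_step a \<theta> p N"
    by (simp add: bind_map_pmf)
  finally show ?thesis .
qed

lemma base_bp:
  assumes "\<alpha> > 0" "l > 0" "v \<in> set_pmf (gport_attach \<alpha> l p [])"
  shows "branch_partition [v] = {{1}}"
proof -
  have vp: "valid p []" by (simp add: valid_def)
  have "vok p 0 v" using attach_props(2)[OF assms(1,2) vp] assms(3) Vset_vok by fastforce
  then obtain j where "v = Root j" by (auto simp: vok_def split: vertex.splits)
  moreover have "branch_partition [] = {}" by (simp add: bp_eq tops_def)
  ultimately show ?thesis using bp_snoc[OF vp, of v] \<open>vok p 0 v\<close>
    by (simp add: blk_def crp_insert_def)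
qed

lemma part1:
  assumes "\<alpha> > 0" "l > 0" "a = 1 / (1 + \<alpha>)" "\<theta> = l / (1 + \<alpha>)"
  shows "map_pmf branch_partition (gport \<alpha> l p (Suc N)) = crp a \<theta> p (Suc N)"
proof (induction N)
  case 0
  have "map_pmf branch_partition (gport \<alpha> l p (Suc 0))
     = map_pmf (\<lambda>v. branch_partition [v]) (gport_attach \<alpha> l p [])"
    by (simp add: map_pmf_comp bind_return_pmf)
  also have "\<dots> = map_pmf (\<lambda>_. {{1}}) (gport_attach \<alpha> l p [])"
    by (rule map_pmf_cong) (simp_all add: base_bp[OF assms(1,2)])
  finally show ?case by simp
next
  case (Suc N)
  show ?case by (simp only: gport_Suc_map[OF assms, where N="Suc N"] Suc.IH crp.simps(3))
qed

lemma path_support: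
  shows "fs \<in> set_pmf (gport_path \<alpha> l p N) \<Longrightarrow> length fs = Suc N \<and> last fs \<in> set_pmf (gport \<alpha> l p N)"
proof (induction N arbitrary: fs)
  case 0 then show ?case by simp
next
  case (Suc N)
  then obtain gs v where gs: "gs \<in> set_pmf (gport_path \<alpha> l p N)" "v \<in> set_pmf (gport_attach \<alpha> l p (last gs))"
     "fs = gs @ [last gs @ [v]]"
    by auto
  then show ?case using Suc.IH[OF gs(1)] by auto
qed

lemma part2:
  assumes "\<alpha> > 0" "l > 0" "a = 1 / (1 + \<alpha>)" "\<theta> = l / (1 + \<alpha>)"
  shows "map_pmf (\<lambda>fs. map branch_partition (tl fs)) (gport_path \<alpha> l p (Suc N)) = crp_path a \<theta> p (Suc N)"
proof (induction N)
  case 0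
  have "map_pmf (\<lambda>fs. map branch_partition (tl fs)) (gport_path \<alpha> l p (Suc 0))
     = map_pmf (\<lambda>v. [branch_partition [v]]) (gport_attach \<alpha> l p [])"
    by (simp add: map_pmf_comp bind_return_pmf)
  also have "\<dots> = map_pmf (\<lambda>_. [{{1}}]) (gport_attach \<alpha> l p [])"
    by (rule map_pmf_cong) (simp_all add: base_bp[OF assms(1,2)])
  finally show ?case by simp
next
  case (Suc N)
  define f where "f = (\<lambda>fs. map branch_partition (tl fs))"
  have "map_pmf f (gport_path \<alpha> l p (Suc (Suc N)))
     = gport_path \<alpha> l p (Suc N) \<bind> (\<lambda>fs. map_pmf (\<lambda>v. f (fs @ [last fs @ [v]])) (gport_attach \<alpha> l p (last fs)))"
    by (simp add: map_bind_pmf map_pmf_comp)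
  also have "\<dots> = gport_path \<alpha> l p (Suc N) \<bind> (\<lambda>fs. map_pmf (\<lambda>Q. f fs @ [Q]) (crp_step a \<theta> p (Suc N) (last (f fs))))"
  proof (rule bind_pmf_cong)
    fix fs assume fs: "fs \<in> set_pmf (gport_path \<alpha> l p (Suc N))"
    then have len: "length fs = Suc (Suc N)" and ls: "last fs \<in> set_pmf (gport \<alpha> l p (Suc N))"
      using path_support by blast+
    have vl: "valid p (last fs)" "length (last fs) = Suc N" using gport_support[OF assms(1,2) ls] by auto
    have ne: "fs \<noteq> []" "tl fs \<noteq> []" using len by (auto simp: length_Suc_conv)
    have fsnoc: "f (fs @ [y]) = f fs @ [branch_partition y]" for y using ne unfolding f_def by simp
    have lf: "last (f fs) = branch_partition (last fs)" using ne unfolding f_def by (simp add: last_map last_tl)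
    have "map_pmf (\<lambda>v. f (fs @ [last fs @ [v]])) (gport_attach \<alpha> l p (last fs))
        = map_pmf (\<lambda>Q. f fs @ [Q]) (map_pmf (\<lambda>v. branch_partition (last fs @ [v])) (gport_attach \<alpha> l p (last fs)))"
      by (simp add: fsnoc map_pmf_comp)
    also have "\<dots> = map_pmf (\<lambda>Q. f fs @ [Q]) (crp_step a \<theta> p (Suc N) (last (f fs)))"
      using step_lemma[OF assms(1,2) vl(1) assms(3,4)] vl(2) lf by simp
    finally show "map_pmf (\<lambda>v. f (fs @ [last fs @ [v]])) (gport_attach \<alpha> l p (last fs))
        = map_pmf (\<lambda>Q. f fs @ [Q]) (crp_step a \<theta> p (Suc N) (last (f fs)))" .
  qed simp
  also have "\<dots> = map_pmf f (gport_path \<alpha> l p (Suc N)) \<bind> (\<lambda>ps. map_pmf (\<lambda>Q. ps @ [Q]) (crp_step a \<theta> p (Suc N) (last ps)))"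
    by (simp add: bind_map_pmf)
  finally show ?case using Suc unfolding f_def by simp
qed

theorem mainTheorem11:
  fixes \<alpha> l a \<theta> :: real and p N :: nat
  assumes "\<alpha> > 0" and "l > 0" and "p \<ge> 1"
    and "a = 1 / (1 + \<alpha>)" and "\<theta> = l / (1 + \<alpha>)"
    and "N \<ge> 1"
  shows "map_pmf branch_partition (gport \<alpha> l p N) = crp a \<theta> p N
         \<and> map_pmf (\<lambda>fs. map branch_partition (tl fs)) (gport_path \<alpha> l p N) = crp_path a \<theta> p N"
proof -
  obtain M where M: "N = Suc M" using assms(6) by (cases N) auto
  show ?thesis unfolding M using part1[OF assms(1,2,4,5)] part2[OF assms(1,2,4,5)] by blast
qed

end
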